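(* Let $1\le k<d$, $\mu>0$, $u\in\mathbb{R}^d$ with $u_1\ge\cdots\ge u_d\ge0$, $\bar u_i=u_i/(1+\mu)$ for $i\in[k]$, and let $\tilde x=\mathrm{argmin}_{x\in\mathbb{R}^d}\{\mu\|x\|_{k,2}^2+\|x-u\|^2\}$. Then there exist indices $j_s\in\{1,\dots,k\}$, $j_e\in\{k,\dots,d\}$ and a number $\xi$ with $u_{j_e+1}\le\xi\le\bar u_{j_s-1}$ (with the conventions $\bar u_0=+\infty$, $u_{d+1}=0$) such that $$\tilde x=(\bar u_1,\dots,\bar u_{j_s-1},\underbrace{\xi,\dots,\xi}_{\text{positions } j_s,\dots,j_e},u_{j_e+1},\dots,u_d)^\top .$$ Moreover, for arbitrary $v\in\mathbb{R}^d$, if $u=\sigma(|v|)$ where $|v|=(|v_1|,\dots,|v_d|)$ and $\sigma$ is a permutation of coordinates sorting $|v|$ in non-increasing order, then $\mathrm{prox}_{\frac{\mu}{2}\|\cdot\|_{k,2}^2}(v)=\mathrm{sign}(v)\odot\sigma^{-1}(\tilde x)$.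
   Context: $\|\cdot\|$ is the Euclidean norm. For $z\in\mathbb{R}^m$ and integer $j\ge0$, $\|z\|_{j,2}$ is the Euclidean norm of the vector obtained from $z$ by keeping (up to) $j$ entries of largest absolute value and setting the others to $0$. For convex $g$, $\mathrm{prox}_g(x)=\mathrm{argmin}_y\{g(y)+\frac12\|x-y\|^2\}$. $\mathrm{sign}(v)\in\{-1,1\}^d$ has $i$th entry $1$ if $v_i\ge0$ and $-1$ otherwise; $\odot$ is the entrywise product; $\sigma$ and $\sigma^{-1}$ act on vectors by permuting coordinates, with $\sigma^{-1}(\sigma(x))=x$. *)

theory Defs
  imports Complex_Main
begin

text \<open>Vectors of R^d are functions nat => real, coordinates 1..d, zero elsewhere.\<close>
definition vecs :: "nat \<Rightarrow> (nat \<Rightarrow> real) set" where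
  "vecs d = {x. \<forall>i. i \<notin> {1..d} \<longrightarrow> x i = 0}"

definition enorm :: "nat \<Rightarrow> (nat \<Rightarrow> real) \<Rightarrow> real" where
  "enorm d z = sqrt (\<Sum>i=1..d. (z i)^2)"

definition topk_norm :: "nat \<Rightarrow> nat \<Rightarrow> (nat \<Rightarrow> real) \<Rightarrow> real" where
  "topk_norm d j z = Max ((\<lambda>S. sqrt (\<Sum>i\<in>S. (z i)^2)) ` {S. S \<subseteq> {1..d} \<and> card S \<le> j})"

definition minimizers :: "('a \<Rightarrow> real) \<Rightarrow> 'a set \<Rightarrow> 'a set" where
  "minimizers F A = {x \<in> A. \<forall>y \<in> A. F x \<le> F y}"

text \<open>prox_g(v) as the set of minimizers (a singleton for the convex g used here).\<close>
definition prox_set :: "nat \<Rightarrow> ((nat \<Rightarrow> real) \<Rightarrow> real) \<Rightarrow> (nat \<Rightarrow> real) \<Rightarrow> (nat \<Rightarrow> real) set" where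
  "prox_set d g v = minimizers (\<lambda>y. g y + 1/2 * (enorm d (\<lambda>i. v i - y i))^2) (vecs d)"

definition sign_of :: "real \<Rightarrow> real" where
  "sign_of t = (if t \<ge> 0 then 1 else -1)"

end

theory Submission
  imports Defs "HOL-Analysis.Analysis"
begin


lemma adm_finite: "finite {S. S \<subseteq> {1..d::nat} \<and> card S \<le> k}"
  by (rule finite_subset[of _ "Pow {1..d}"]) auto

lemma topk_ge:
  assumes "S \<subseteq> {1..d}" "card S \<le> k"
  shows "sqrt (\<Sum>i\<in>S. (z i)^2) \<le> topk_norm d k z"
  unfolding topk_norm_def
  by (rule Max_ge) (use adm_finite assms in auto)

lemma topk_ex:
  "\<exists>S. S \<subseteq> {1..d} \<and> card S \<le> k \<and> topk_norm d k z = sqrt (\<Sum>i\<in>S. (z i)^2)"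
proof -
  have "topk_norm d k z \<in> (\<lambda>S. sqrt (\<Sum>i\<in>S. (z i)^2)) ` {S. S \<subseteq> {1..d} \<and> card S \<le> k}"
    unfolding topk_norm_def
    by (rule Max_in) (use adm_finite in auto)
  then show ?thesis by auto
qed

lemma topk_nonneg: "0 \<le> topk_norm d k z"
  using topk_ge[of "{}" d k z] by simp

lemma topk_le:
  assumes "\<And>S. S \<subseteq> {1..d} \<Longrightarrow> card S \<le> k \<Longrightarrow> sqrt (\<Sum>i\<in>S. (z i)^2) \<le> c"
  shows "topk_norm d k z \<le> c"
  using topk_ex[of d k z] assms by auto

lemma topk_sq_ex:
  "\<exists>S. S \<subseteq> {1..d} \<and> card S \<le> k \<and> (topk_norm d k z)^2 = (\<Sum>i\<in>S. (z i)^2)"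
  using topk_ex[of d k z] by (auto simp: sum_nonneg)

lemma topk_sq_ge:
  assumes "S \<subseteq> {1..d}" "card S \<le> k"
  shows "(\<Sum>i\<in>S. (z i)^2) \<le> (topk_norm d k z)^2"
proof -
  have "sqrt (\<Sum>i\<in>S. (z i)^2) \<le> topk_norm d k z" by (rule topk_ge[OF assms])
  then have "(sqrt (\<Sum>i\<in>S. (z i)^2))^2 \<le> (topk_norm d k z)^2"
    by (rule power_mono) (auto simp: sum_nonneg)
  then show ?thesis by (simp add: sum_nonneg)
qed

lemma enorm_sq: "(enorm d z)^2 = (\<Sum>i=1..d. (z i)^2)"
  unfolding enorm_def by (simp add: sum_nonneg)

lemma topk_mid:
  "(topk_norm d k (\<lambda>i. (x i + y i)/2))^2 \<le> ((topk_norm d k x)^2 + (topk_norm d k y)^2)/2"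
proof -
  obtain S where S: "S \<subseteq> {1..d}" "card S \<le> k"
    "(topk_norm d k (\<lambda>i. (x i + y i)/2))^2 = (\<Sum>i\<in>S. ((x i + y i)/2)^2)"
    using topk_sq_ex by blast
  have "(\<Sum>i\<in>S. ((x i + y i)/2)^2) \<le> (\<Sum>i\<in>S. ((x i)^2 + (y i)^2)/2)"
  proof (rule sum_mono)
    fix i show "((x i + y i)/2)^2 \<le> ((x i)^2 + (y i)^2)/2"
      using sum_squares_ge_zero[of "x i - y i" 0] by (simp add: power2_eq_square field_simps)
  qed
  also have "\<dots> = ((\<Sum>i\<in>S. (x i)^2) + (\<Sum>i\<in>S. (y i)^2))/2"
    by (simp only: sum.distrib[symmetric] sum_divide_distrib)
  also have "\<dots> \<le> ((topk_norm d k x)^2 + (topk_norm d k y)^2)/2"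
    using topk_sq_ge[OF S(1,2), of x] topk_sq_ge[OF S(1,2), of y] by simp
  finally show ?thesis using S(3) by simp
qed

lemma unique_min:
  fixes \<mu> :: real
  assumes mu: "\<mu> > 0"
    and hx: "x \<in> minimizers (\<lambda>x. \<mu> * (topk_norm d k x)^2 + (enorm d (\<lambda>i. x i - w i))^2) (vecs d)"
    and hy: "y \<in> minimizers (\<lambda>x. \<mu> * (topk_norm d k x)^2 + (enorm d (\<lambda>i. x i - w i))^2) (vecs d)"
  shows "x = y"
proof -
  define F where "F = (\<lambda>x. \<mu> * (topk_norm d k x)^2 + (enorm d (\<lambda>i. x i - w i))^2)"
  define m where "m = (\<lambda>i. (x i + y i)/2)"
  have xv: "x \<in> vecs d" and yv: "y \<in> vecs d" using hx hy by (auto simp: minimizers_def)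
  have mv: "m \<in> vecs d" using xv yv by (auto simp: vecs_def m_def)
  have "F x \<le> F m" "F y \<le> F m" "F x \<le> F y" "F y \<le> F x"
    using hx hy mv xv yv unfolding minimizers_def F_def by auto
  have eq: "(\<Sum>i=1..d. (m i - w i)^2) = ((\<Sum>i=1..d. (x i - w i)^2) + (\<Sum>i=1..d. (y i - w i)^2))/2
      - (\<Sum>i=1..d. (x i - y i)^2)/4"
    unfolding m_def
    by (simp add: sum_divide_distrib sum.distrib[symmetric] sum_subtractf[symmetric])
       (rule sum.cong, simp, simp add: power2_eq_square field_simps)
  have "F m \<le> (F x + F y)/2 - (\<Sum>i=1..d. (x i - y i)^2)/4"
  proof -
    have "\<mu> * (topk_norm d k m)^2 \<le> \<mu> * (((topk_norm d k x)^2 + (topk_norm d k y)^2)/2)"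
      using topk_mid[of d k x y] mu unfolding m_def by (intro mult_left_mono) auto
    then show ?thesis using eq unfolding F_def enorm_sq m_def by (simp add: field_simps)
  qed
  then have "4 * F m \<le> 2 * F x + 2 * F y - (\<Sum>i=1..d. (x i - y i)^2)"
    by (simp add: field_simps)
  with \<open>F x \<le> F m\<close> \<open>F y \<le> F m\<close> have "(\<Sum>i=1..d. (x i - y i)^2) \<le> 0"
    by linarith
  then have "\<forall>i\<in>{1..d}. (x i - y i)^2 = 0"
    using sum_nonneg_eq_0_iff[of "{1..d}" "\<lambda>i. (x i - y i)^2"]
    by (smt (verit) finite_atLeastAtMost sum_nonneg zero_le_power2)
  then show ?thesis using xv yv by (auto simp: vecs_def fun_eq_iff)
qed



lemma top_sum:
  fixes a :: "nat \<Rightarrow> real"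
  assumes mono: "\<forall>i j. 1 \<le> i \<longrightarrow> i \<le> j \<longrightarrow> j \<le> d \<longrightarrow> a j \<le> a i"
    and nn: "\<forall>i\<in>{1..d}. 0 \<le> a i"
    and S: "S \<subseteq> {1..d}" "card S \<le> k" and k: "1 \<le> k" "k \<le> d"
  shows "(\<Sum>i\<in>S. a i) \<le> (\<Sum>i=1..k. a i)"
proof -
  define K where "K = {1..k}"
  have fS: "finite S" using S(1) finite_subset by blast
  have fK: "finite K" by (simp add: K_def)
  have e1: "(\<Sum>i\<in>S. a i) = (\<Sum>i\<in>S \<inter> K. a i) + (\<Sum>i\<in>S - K. a i)"
    using sum.Int_Diff[OF fS] by blast
  have e2: "(\<Sum>i\<in>K. a i) = (\<Sum>i\<in>S \<inter> K. a i) + (\<Sum>i\<in>K - S. a i)"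
    using sum.Int_Diff[OF fK, of a S] by (simp add: Int_commute)
  have b1: "(\<Sum>i\<in>S - K. a i) \<le> of_nat (card (S - K)) * a k"
    by (rule sum_bounded_above) (use mono S(1) k in \<open>auto simp: K_def\<close>)
  have b2: "of_nat (card (K - S)) * a k \<le> (\<Sum>i\<in>K - S. a i)"
    by (rule sum_bounded_below) (use mono S(1) k in \<open>auto simp: K_def\<close>)
  have c1: "card (S - K) = card S - card (S \<inter> K)"
    by (rule card_Diff_subset_Int) (use fS in auto)
  have c2: "card (K - S) = card K - card (K \<inter> S)"
    by (rule card_Diff_subset_Int) (use fK in auto)
  have "card (S \<inter> K) \<le> card K" by (rule card_mono[OF fK]) auto
  then have "card (S - K) \<le> card (K - S)"
    using c1 c2 S(2) by (simp add: K_def Int_commute)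
  then have "of_nat (card (S - K)) * a k \<le> of_nat (card (K - S)) * a k"
    using nn k by (intro mult_right_mono) auto
  then show ?thesis using e1 e2 b1 b2 by (simp add: K_def)
qed

lemma exchange:
  fixes a :: "nat \<Rightarrow> real"
  assumes fB: "finite B" and r: "r \<le> card B" "1 \<le> r"
  shows "\<exists>S t. S \<subseteq> B \<and> card S = r \<and> (\<forall>i\<in>S. t \<le> a i) \<and> (\<forall>j\<in>B - S. a j \<le> t)"
proof -
  define C where "C = {S. S \<subseteq> B \<and> card S = r}"
  have fC: "finite C" unfolding C_def
    by (rule finite_subset[of _ "Pow B"]) (use fB in auto)
  have neC: "C \<noteq> {}" unfolding C_def
    using obtain_subset_with_card_n[OF r(1)] by blast
  define M where "M = Max (sum a ` C)"
  have "M \<in> sum a ` C" unfolding M_def by (rule Max_in) (use fC neC in auto)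
  then obtain S where SC: "S \<in> C" and SM: "sum a S = M" by auto
  have maxS: "\<And>S'. S' \<in> C \<Longrightarrow> sum a S' \<le> sum a S"
    unfolding SM M_def by (rule Max_ge) (use fC in auto)
  have SB: "S \<subseteq> B" and cS: "card S = r" using SC by (auto simp: C_def)
  have fS: "finite S" using SB fB finite_subset by blast
  have neS: "S \<noteq> {}" using cS r(2) by auto
  define t where "t = Min (a ` S)"
  have tle: "\<forall>i\<in>S. t \<le> a i" unfolding t_def using fS by auto
  have "t \<in> a ` S" unfolding t_def by (rule Min_in) (use fS neS in auto)
  then obtain i0 where i0: "i0 \<in> S" "a i0 = t" by auto
  have "\<forall>j\<in>B - S. a j \<le> t"
  proof (rule ccontr)
    assume "\<not> (\<forall>j\<in>B - S. a j \<le> t)"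
    then obtain j where j: "j \<in> B" "j \<notin> S" "a j > t" by auto
    define S' where "S' = insert j (S - {i0})"
    have "card S' = r" unfolding S'_def using fS j i0 cS
      by (simp add: card_Diff_singleton) (use neS r(2) in linarith)
    moreover have "S' \<subseteq> B" unfolding S'_def using SB j by auto
    ultimately have "S' \<in> C" by (simp add: C_def)
    have "sum a S' = a j + (sum a S - a i0)" unfolding S'_def using fS j i0
      by (simp add: sum_diff1)
    then have "sum a S' > sum a S" using j i0 by simp
    with maxS[OF \<open>S' \<in> C\<close>] show False by simp
  qed
  then show ?thesis using SB cS tle by blast
qed

lemma knapsack:
  fixes a w :: "nat \<Rightarrow> real"
  assumes fB: "finite B" and SB: "S \<subseteq> B" and cS: "card S = r"
    and w: "\<forall>i\<in>B. 0 \<le> w i \<and> w i \<le> c" and sw: "(\<Sum>i\<in>B. w i) = real r * c"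
    and t1: "\<forall>i\<in>S. t \<le> a i" and t2: "\<forall>j\<in>B - S. a j \<le> t"
  shows "(\<Sum>i\<in>B. w i * a i) \<le> c * (\<Sum>i\<in>S. a i)"
proof -
  have fS: "finite S" using SB fB finite_subset by blast
  have e1: "(\<Sum>i\<in>B. w i * a i) = (\<Sum>i\<in>B - S. w i * a i) + (\<Sum>i\<in>S. w i * a i)"
    using sum.subset_diff[OF SB fB] by blast
  have e2: "(\<Sum>i\<in>B. w i) = (\<Sum>i\<in>B - S. w i) + (\<Sum>i\<in>S. w i)"
    using sum.subset_diff[OF SB fB] by blast
  have b1: "(\<Sum>i\<in>B - S. w i * a i) \<le> (\<Sum>i\<in>B - S. w i * t)"
    by (rule sum_mono) (use w t2 in \<open>auto intro: mult_left_mono\<close>)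
  have b2: "0 \<le> (\<Sum>i\<in>S. (c - w i) * (a i - t))"
    by (rule sum_nonneg) (use w t1 SB in auto)
  have e3: "(\<Sum>i\<in>S. (c - w i) * (a i - t)) = c * (\<Sum>i\<in>S. a i) - (\<Sum>i\<in>S. w i * a i)
      - real r * c * t + t * (\<Sum>i\<in>S. w i)"
  proof -
    have "(\<Sum>i\<in>S. (c - w i) * (a i - t)) = (\<Sum>i\<in>S. c * a i - w i * a i - c * t + t * w i)"
      by (rule sum.cong) (auto simp: algebra_simps)
    also have "\<dots> = c * (\<Sum>i\<in>S. a i) - (\<Sum>i\<in>S. w i * a i) - real (card S) * (c * t) + t * (\<Sum>i\<in>S. w i)"
      by (simp add: sum.distrib sum_subtractf sum_distrib_left)
    finally show ?thesis using cS by (simp add: algebra_simps)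
  qed
  have "(\<Sum>i\<in>B - S. w i * t) = t * (\<Sum>i\<in>B - S. w i)"
    by (simp add: sum_distrib_left mult.commute)
  then show ?thesis using e1 e2 b1 b2 e3 sw by (simp add: algebra_simps)
qed

lemma cs_sqrt:
  fixes h b :: "nat \<Rightarrow> real"
  shows "(\<Sum>i\<in>I. h i * b i) \<le> sqrt (\<Sum>i\<in>I. (h i)^2) * sqrt (\<Sum>i\<in>I. (b i)^2)"
proof -
  have "(\<Sum>i\<in>I. h i * b i)^2 \<le> (\<Sum>i\<in>I. (h i)^2) * (\<Sum>i\<in>I. (b i)^2)"
    by (rule Cauchy_Schwarz_ineq_sum)
  then have "(\<Sum>i\<in>I. h i * b i) \<le> sqrt ((\<Sum>i\<in>I. (h i)^2) * (\<Sum>i\<in>I. (b i)^2))"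
    by (rule real_le_rsqrt)
  then show ?thesis by (simp add: real_sqrt_mult)
qed



lemma cert:
  fixes u :: "nat \<Rightarrow> real" and \<mu> \<xi> :: real
  assumes k1: "1 \<le> k" and kd: "k \<le> d" and mu: "\<mu> > 0"
    and mono: "\<forall>i j. 1 \<le> i \<longrightarrow> i \<le> j \<longrightarrow> j \<le> d \<longrightarrow> u j \<le> u i"
    and unn: "\<forall>i\<in>{1..d}. 0 \<le> u i"
    and js: "1 \<le> js" "js \<le> k" and je: "k \<le> je" "je \<le> d" and xi: "0 \<le> \<xi>"
    and C1: "\<forall>i. 1 \<le> i \<longrightarrow> i < js \<longrightarrow> (1+\<mu>)*\<xi> \<le> u i"
    and C2: "\<forall>i\<in>{js..je}. \<xi> \<le> u i \<and> u i \<le> (1+\<mu>)*\<xi>"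
    and C3: "\<forall>i. je < i \<longrightarrow> i \<le> d \<longrightarrow> u i \<le> \<xi>"
    and C4: "(\<Sum>i=js..je. u i - \<xi>) = \<mu> * real (k + 1 - js) * \<xi>"
  defines "x \<equiv> \<lambda>i. if i \<in> {1..d} then (if i < js then u i/(1+\<mu>) else if i \<le> je then \<xi> else u i) else 0"
  shows "x \<in> minimizers (\<lambda>x. \<mu>*(topk_norm d k x)^2 + (enorm d (\<lambda>i. x i - u i))^2) (vecs d)"
proof -
  define P where "P = {1..<js}"
  define B where "B = {js..je}"
  define Q where "Q = {je<..d}"
  define r where "r = k + 1 - js"
  have split: "\<And>f::nat\<Rightarrow>real. (\<Sum>i=1..d. f i) = (\<Sum>i\<in>P. f i) + (\<Sum>i\<in>B. f i) + (\<Sum>i\<in>Q. f i)"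
  proof -
    fix f :: "nat \<Rightarrow> real"
    have "{1..d} = (P \<union> B) \<union> Q" using js je unfolding P_def B_def Q_def by auto
    moreover have "(P \<union> B) \<inter> Q = {}" "P \<inter> B = {}" using js je unfolding P_def B_def Q_def by auto
    ultimately show "(\<Sum>i=1..d. f i) = (\<Sum>i\<in>P. f i) + (\<Sum>i\<in>B. f i) + (\<Sum>i\<in>Q. f i)"
      by (simp add: sum.union_disjoint P_def B_def Q_def)
  qed
  have opm: "1 + \<mu> > 0" using mu by simp
  have xP: "\<And>i. i \<in> P \<Longrightarrow> x i = u i / (1+\<mu>)" using js je unfolding x_def P_def by auto
  have xB: "\<And>i. i \<in> B \<Longrightarrow> x i = \<xi>" using js je unfolding x_def B_def by auto
  have xQ: "\<And>i. i \<in> Q \<Longrightarrow> x i = u i" using js je unfolding x_def Q_def by auto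
  have xv: "x \<in> vecs d" unfolding vecs_def x_def by auto
  have cardP: "card P = js - 1" unfolding P_def by simp
  have cardB: "card B = je + 1 - js" unfolding B_def by simp
  define A2 where "A2 = (\<Sum>i\<in>P. (x i)^2) + real r * \<xi>^2"
  have A2nn: "0 \<le> A2" unfolding A2_def using xi by (simp add: sum_nonneg)
  define A where "A = sqrt A2"
  have AA: "A^2 = A2" "0 \<le> A" unfolding A_def using A2nn by auto
  have xnn: "\<forall>i\<in>{1..d}. 0 \<le> x i" using unn xi opm unfolding x_def by auto
  have xmono: "\<forall>i j. 1 \<le> i \<longrightarrow> i \<le> j \<longrightarrow> j \<le> d \<longrightarrow> x j \<le> x i"
  proof (intro allI impI)
    fix i j :: nat assume ij: "1 \<le> i" "i \<le> j" "j \<le> d"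
    have ui: "u j \<le> u i" using mono ij by blast
    show "x j \<le> x i"
    proof (cases "j < js")
      case True
      then show ?thesis using ij ui opm unfolding x_def by (auto simp: divide_right_mono)
    next
      case jn: False
      show ?thesis
      proof (cases "i < js")
        case True
        have "(1+\<mu>)*\<xi> \<le> u i" using C1 ij True by blast
        then have xi_le: "\<xi> \<le> u i / (1+\<mu>)" using opm by (simp add: field_simps)
        have "x j \<le> \<xi>" using jn ij C3 unfolding x_def by auto
        then show ?thesis using True ij xi_le unfolding x_def by auto
      next
        case inn: False
        show ?thesis
        proof (cases "j \<le> je")
          case True then show ?thesis using inn jn ij unfolding x_def by auto
        next
          case jg: False
          have "u j \<le> \<xi>" using C3 jg ij by auto
          then show ?thesis using inn jn ij ui C2 unfolding x_def B_def by auto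
        qed
      qed
    qed
  qed
  have T2x: "(topk_norm d k x)^2 \<le> A2"
  proof -
    have sum1k: "(\<Sum>i=1..k. (x i)^2) = A2"
    proof -
      have "{1..k} = P \<union> {js..k}" "P \<inter> {js..k} = {}" using js unfolding P_def by auto
      then have "(\<Sum>i=1..k. (x i)^2) = (\<Sum>i\<in>P. (x i)^2) + (\<Sum>i=js..k. (x i)^2)"
        by (simp add: sum.union_disjoint P_def)
      also have "(\<Sum>i=js..k. (x i)^2) = (\<Sum>i=js..k. \<xi>^2)"
        by (rule sum.cong) (use xB je in \<open>auto simp: B_def\<close>)
      finally show ?thesis unfolding A2_def r_def by simp
    qed
    have "topk_norm d k x \<le> sqrt A2"
    proof (rule topk_le)
      fix S assume S: "S \<subseteq> {1..d}" "card S \<le> k"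
      have "(\<Sum>i\<in>S. (x i)^2) \<le> (\<Sum>i=1..k. (x i)^2)"
      proof (rule top_sum[OF _ _ S k1 kd])
        show "\<forall>i j. 1 \<le> i \<longrightarrow> i \<le> j \<longrightarrow> j \<le> d \<longrightarrow> (x j)\<^sup>2 \<le> (x i)\<^sup>2"
          using xmono xnn by (auto intro!: power_mono)
        show "\<forall>i\<in>{1..d}. 0 \<le> (x i)\<^sup>2" by simp
      qed
      then show "sqrt (\<Sum>i\<in>S. (x i)^2) \<le> sqrt A2" using sum1k by simp
    qed
    then have "(topk_norm d k x)^2 \<le> (sqrt A2)^2"
      by (rule power_mono) (simp add: topk_nonneg)
    then show ?thesis using A2nn by simp
  qed
  have gx: "(\<Sum>i=1..d. x i * (u i - x i)) = \<mu> * A2"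
  proof -
    have p: "(\<Sum>i\<in>P. x i * (u i - x i)) = \<mu> * (\<Sum>i\<in>P. (x i)^2)"
    proof -
      have "\<forall>i\<in>P. x i * (u i - x i) = \<mu> * (x i)^2"
      proof
        fix i assume i: "i \<in> P"
        have "u i - x i = \<mu> * x i" using xP[OF i] opm by (simp add: field_simps)
        then show "x i * (u i - x i) = \<mu> * (x i)^2" by (simp add: power2_eq_square)
      qed
      then show ?thesis by (auto simp: sum_distrib_left intro!: sum.cong)
    qed
    have b: "(\<Sum>i\<in>B. x i * (u i - x i)) = \<xi> * (\<mu> * real r * \<xi>)"
    proof -
      have "(\<Sum>i\<in>B. x i * (u i - x i)) = (\<Sum>i\<in>B. \<xi> * (u i - \<xi>))"
        by (rule sum.cong) (use xB in auto)
      also have "\<dots> = \<xi> * (\<Sum>i\<in>B. u i - \<xi>)" by (simp add: sum_distrib_left)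
      finally show ?thesis using C4 unfolding B_def r_def by simp
    qed
    have q: "(\<Sum>i\<in>Q. x i * (u i - x i)) = 0"
      by (rule sum.neutral) (use xQ in auto)
    show ?thesis using split p b q unfolding A2_def by (simp add: algebra_simps power2_eq_square)
  qed
  have gy: "(\<Sum>i=1..d. y i * (u i - x i)) \<le> \<mu> * A * topk_norm d k y" for y
  proof -
    have r1: "1 \<le> r" unfolding r_def using js by simp
    have rB: "r \<le> card B" unfolding r_def cardB using je by simp
    obtain S t where S: "S \<subseteq> B" "card S = r" "\<forall>i\<in>S. t \<le> \<bar>y i\<bar>" "\<forall>j\<in>B - S. \<bar>y j\<bar> \<le> t"
      using exchange[of B r "\<lambda>i. \<bar>y i\<bar>"] r1 rB unfolding B_def by auto
    have p: "(\<Sum>i\<in>P. y i * (u i - x i)) \<le> \<mu> * (\<Sum>i\<in>P. x i * \<bar>y i\<bar>)"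
      unfolding sum_distrib_left
    proof (rule sum_mono)
      fix i assume i: "i \<in> P"
      have "u i - x i = \<mu> * x i" using xP[OF i] opm by (simp add: field_simps)
      moreover have "0 \<le> x i" using xnn i js je unfolding P_def by auto
      ultimately show "y i * (u i - x i) \<le> \<mu> * (x i * \<bar>y i\<bar>)"
        using mu by (simp add: algebra_simps)
           (metis abs_ge_self abs_mult abs_of_nonneg mult_left_mono mult_nonneg_nonneg order_less_imp_le)
    qed
    have b0: "(\<Sum>i\<in>B. y i * (u i - x i)) \<le> (\<Sum>i\<in>B. (u i - \<xi>) * \<bar>y i\<bar>)"
    proof (rule sum_mono)
      fix i assume i: "i \<in> B"
      have "0 \<le> u i - \<xi>" using C2 i unfolding B_def by auto
      then show "y i * (u i - x i) \<le> (u i - \<xi>) * \<bar>y i\<bar>" using xB[OF i]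
        by (metis abs_ge_self abs_mult abs_of_nonneg mult.commute)
    qed
    have b1: "(\<Sum>i\<in>B. (u i - \<xi>) * \<bar>y i\<bar>) \<le> (\<mu> * \<xi>) * (\<Sum>i\<in>S. \<bar>y i\<bar>)"
    proof (rule knapsack[OF _ S(1) S(2) _ _ S(3) S(4)])
      show "finite B" by (simp add: B_def)
      show "\<forall>i\<in>B. 0 \<le> u i - \<xi> \<and> u i - \<xi> \<le> \<mu> * \<xi>" using C2 unfolding B_def
        by (auto simp: algebra_simps)
      show "(\<Sum>i\<in>B. u i - \<xi>) = real r * (\<mu> * \<xi>)" using C4 unfolding B_def r_def by simp
    qed
    have q: "(\<Sum>i\<in>Q. y i * (u i - x i)) = 0"
      by (rule sum.neutral) (use xQ in auto)
    define h where "h = (\<lambda>i. if i \<in> P then x i else \<xi>)"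
    have PS: "P \<inter> S = {}" using S(1) unfolding P_def B_def by auto
    have fP: "finite P" "finite S" using S(1) finite_subset unfolding P_def B_def by auto
    have hs: "(\<Sum>i\<in>P \<union> S. h i * \<bar>y i\<bar>) = (\<Sum>i\<in>P. x i * \<bar>y i\<bar>) + \<xi> * (\<Sum>i\<in>S. \<bar>y i\<bar>)"
    proof -
      have "(\<Sum>i\<in>P \<union> S. h i * \<bar>y i\<bar>) = (\<Sum>i\<in>P. h i * \<bar>y i\<bar>) + (\<Sum>i\<in>S. h i * \<bar>y i\<bar>)"
        using PS fP by (simp add: sum.union_disjoint)
      also have "(\<Sum>i\<in>P. h i * \<bar>y i\<bar>) = (\<Sum>i\<in>P. x i * \<bar>y i\<bar>)"
        by (rule sum.cong) (auto simp: h_def)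
      also have "(\<Sum>i\<in>S. h i * \<bar>y i\<bar>) = (\<Sum>i\<in>S. \<xi> * \<bar>y i\<bar>)"
        by (rule sum.cong) (use PS in \<open>auto simp: h_def\<close>)
      finally show ?thesis by (simp add: sum_distrib_left)
    qed
    have h2: "(\<Sum>i\<in>P \<union> S. (h i)^2) = A2"
    proof -
      have "(\<Sum>i\<in>P \<union> S. (h i)^2) = (\<Sum>i\<in>P. (h i)^2) + (\<Sum>i\<in>S. (h i)^2)"
        using PS fP by (simp add: sum.union_disjoint)
      also have "(\<Sum>i\<in>P. (h i)^2) = (\<Sum>i\<in>P. (x i)^2)"
        by (rule sum.cong) (auto simp: h_def)
      also have "(\<Sum>i\<in>S. (h i)^2) = (\<Sum>i\<in>S. \<xi>^2)"
        by (rule sum.cong) (use PS in \<open>auto simp: h_def\<close>)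
      finally show ?thesis using S(2) unfolding A2_def by simp
    qed
    have adm: "P \<union> S \<subseteq> {1..d}" "card (P \<union> S) \<le> k"
    proof -
      show "P \<union> S \<subseteq> {1..d}" using S(1) je js unfolding P_def B_def by force
      have "card (P \<union> S) = card P + card S" using PS fP by (simp add: card_Un_disjoint)
      then show "card (P \<union> S) \<le> k" using cardP S(2) js unfolding r_def by simp
    qed
    have cs: "(\<Sum>i\<in>P \<union> S. h i * \<bar>y i\<bar>) \<le> A * topk_norm d k y"
    proof -
      have "(\<Sum>i\<in>P \<union> S. h i * \<bar>y i\<bar>) \<le> sqrt (\<Sum>i\<in>P \<union> S. (h i)^2) * sqrt (\<Sum>i\<in>P \<union> S. \<bar>y i\<bar>^2)"
        by (rule cs_sqrt)
      also have "\<dots> = A * sqrt (\<Sum>i\<in>P \<union> S. (y i)^2)" using h2 unfolding A_def by simp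
      also have "\<dots> \<le> A * topk_norm d k y"
        using topk_ge[OF adm, of y] AA(2) by (simp add: mult_left_mono)
      finally show ?thesis .
    qed
    have "(\<Sum>i=1..d. y i * (u i - x i)) \<le> \<mu> * (\<Sum>i\<in>P. x i * \<bar>y i\<bar>) + (\<mu> * \<xi>) * (\<Sum>i\<in>S. \<bar>y i\<bar>)"
      using split[of "\<lambda>i. y i * (u i - x i)"] p b0 b1 q by linarith
    also have "\<dots> = \<mu> * (\<Sum>i\<in>P \<union> S. h i * \<bar>y i\<bar>)" using hs by (simp add: algebra_simps)
    also have "\<dots> \<le> \<mu> * (A * topk_norm d k y)" using cs mu by (simp add: mult_left_mono)
    finally show ?thesis by (simp add: algebra_simps)
  qed
  have "\<forall>y\<in>vecs d. \<mu>*(topk_norm d k x)^2 + (enorm d (\<lambda>i. x i - u i))^2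
      \<le> \<mu>*(topk_norm d k y)^2 + (enorm d (\<lambda>i. y i - u i))^2"
  proof
    fix y assume "y \<in> vecs d"
    define s where "s = topk_norm d k y"
    have sq: "(\<Sum>i=1..d. (y i - u i)^2) = (\<Sum>i=1..d. (x i - u i)^2) + (\<Sum>i=1..d. (y i - x i)^2)
        - 2 * (\<Sum>i=1..d. y i * (u i - x i)) + 2 * (\<Sum>i=1..d. x i * (u i - x i))"
    proof -
      have "(\<Sum>i=1..d. (y i - u i)^2) = (\<Sum>i=1..d. (x i - u i)^2 + (y i - x i)^2
          - 2 * (y i * (u i - x i)) + 2 * (x i * (u i - x i)))"
        by (rule sum.cong) (auto simp: power2_eq_square algebra_simps)
      also have "\<dots> = (\<Sum>i=1..d. (x i - u i)^2) + (\<Sum>i=1..d. (y i - x i)^2)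
        - 2 * (\<Sum>i=1..d. y i * (u i - x i)) + 2 * (\<Sum>i=1..d. x i * (u i - x i))"
        by (simp add: sum.distrib sum_subtractf sum_distrib_left)
      finally show ?thesis .
    qed
    have nn: "0 \<le> (\<Sum>i=1..d. (y i - x i)^2)" by (simp add: sum_nonneg)
    have g: "(\<Sum>i=1..d. y i * (u i - x i)) \<le> \<mu> * A * s" using gy unfolding s_def .
    have t: "\<mu> * (topk_norm d k x)^2 \<le> \<mu> * A2" using T2x mu by (simp add: mult_left_mono)
    have sqr: "0 \<le> \<mu> * (s - A)^2" using mu by simp
    have "\<mu> * (s - A)^2 = \<mu> * s^2 - 2 * (\<mu> * A * s) + \<mu> * A2"
      using AA by (simp add: power2_eq_square algebra_simps)
    then show "\<mu>*(topk_norm d k x)^2 + (enorm d (\<lambda>i. x i - u i))^2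
      \<le> \<mu>*(topk_norm d k y)^2 + (enorm d (\<lambda>i. y i - u i))^2"
      unfolding enorm_sq s_def[symmetric] using sq nn g t sqr gx by linarith
  qed
  then show ?thesis using xv unfolding minimizers_def by auto
qed



lemma exist_params:
  fixes u :: "nat \<Rightarrow> real" and \<mu> :: real
  assumes k1: "1 \<le> k" and kd: "k \<le> d" and mu: "\<mu> > 0"
    and mono: "\<forall>i j. 1 \<le> i \<longrightarrow> i \<le> j \<longrightarrow> j \<le> d \<longrightarrow> u j \<le> u i"
    and unn: "\<forall>i\<in>{1..d}. 0 \<le> u i"
  shows "\<exists>js je \<xi>. 1 \<le> js \<and> js \<le> k \<and> k \<le> je \<and> je \<le> d \<and> 0 \<le> \<xi>
    \<and> (\<forall>i. 1 \<le> i \<longrightarrow> i < js \<longrightarrow> (1+\<mu>)*\<xi> \<le> u i)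
    \<and> (\<forall>i\<in>{js..je}. \<xi> \<le> u i \<and> u i \<le> (1+\<mu>)*\<xi>)
    \<and> (\<forall>i. je < i \<longrightarrow> i \<le> d \<longrightarrow> u i \<le> \<xi>)
    \<and> (\<Sum>i=js..je. u i - \<xi>) = \<mu> * real (k + 1 - js) * \<xi>
    \<and> (if je = d then 0 else u (je + 1)) \<le> \<xi>
    \<and> (js = 1 \<or> \<xi> \<le> u (js - 1) / (1 + \<mu>))"
proof (cases "u k \<le> 0")
  case True
  have z: "\<forall>i\<in>{k..d}. u i = 0"
  proof
    fix i assume i: "i \<in> {k..d}"
    have "u i \<le> u k" using mono i k1 by auto
    moreover have "0 \<le> u i" using unn i k1 by auto
    ultimately show "u i = 0" using True by linarith
  qed
  have c4: "(\<Sum>i=k..d. u i - 0) = \<mu> * real (k + 1 - k) * 0" using z by simp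
  have "js = 1 \<or> 0 \<le> u (js - 1) / (1 + \<mu>)" if "js = k" for js
  proof (cases "k = 1")
    case False
    then have "k - 1 \<in> {1..d}" using k1 kd by auto
    then have "0 \<le> u (k - 1)" using unn by blast
    then show ?thesis using mu that by simp
  qed (use that in simp)
  note js0 = this[of k, OF refl]
  have C1: "\<forall>i. 1 \<le> i \<longrightarrow> i < k \<longrightarrow> (1+\<mu>)*0 \<le> u i"
  proof (intro allI impI)
    fix i assume i: "1 \<le> i" "i < k"
    then have "i \<in> {1..d}" using kd by auto
    then show "(1+\<mu>)*0 \<le> u i" using unn by simp
  qed
  have C2: "\<forall>i\<in>{k..d}. 0 \<le> u i \<and> u i \<le> (1+\<mu>)*0" using z by simp
  have C3: "\<forall>i. d < i \<longrightarrow> i \<le> d \<longrightarrow> u i \<le> 0" by simp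
  have S1: "(if d = d then 0 else u (d + 1)) \<le> (0::real)" by simp
  show ?thesis
    apply (rule exI[of _ k], rule exI[of _ d], rule exI[of _ 0])
    using k1 kd C1 C2 C3 c4 S1 js0 by blast
next
  case False
  then have uk: "u k > 0" by simp
  have opm: "1 + \<mu> > 0" using mu by simp
  define c where "c = (\<lambda>i t. max 0 (min (u i - t) (\<mu> * t)))"
  define \<Phi> where "\<Phi> = (\<lambda>t. (\<Sum>i=1..d. c i t) - real k * \<mu> * t)"
  define t0 where "t0 = u k / (1 + \<mu>)"
  define t1 where "t1 = u 1"
  have t0pos: "t0 > 0" unfolding t0_def using uk opm by simp
  have ukt0: "u k = (1+\<mu>) * t0" unfolding t0_def using opm by simp
  have u1k: "u k \<le> u 1" using mono k1 kd by auto
  have "0 < \<mu> * t0" using mu t0pos by simp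
  then have "t0 \<le> u k" using ukt0 by (simp add: algebra_simps)
  then have t01: "t0 \<le> t1" unfolding t1_def using u1k by simp
  have cnn: "\<And>i t. 0 \<le> c i t" unfolding c_def by simp
  have cle: "\<And>i t. c i t \<le> max 0 (\<mu> * t)" unfolding c_def by simp
  have Phi0: "0 \<le> \<Phi> t0"
  proof -
    have "\<forall>i\<in>{1..k}. c i t0 = \<mu> * t0"
    proof
      fix i assume i: "i \<in> {1..k}"
      have "u k \<le> u i" using mono i kd by auto
      then have "\<mu> * t0 \<le> u i - t0" using ukt0 by (simp add: algebra_simps)
      then show "c i t0 = \<mu> * t0" unfolding c_def using mu t0pos by simp
    qed
    then have "(\<Sum>i=1..k. c i t0) = real k * \<mu> * t0" by simp
    moreover have "(\<Sum>i=1..k. c i t0) \<le> (\<Sum>i=1..d. c i t0)"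
      by (rule sum_mono2) (use kd cnn in auto)
    ultimately show ?thesis unfolding \<Phi>_def by simp
  qed
  have Phi1: "\<Phi> t1 \<le> 0"
  proof -
    have "\<forall>i\<in>{1..d}. c i t1 = 0"
    proof
      fix i assume i: "i \<in> {1..d}"
      have "u i \<le> u 1" using mono i by auto
      then show "c i t1 = 0" unfolding c_def t1_def by simp
    qed
    then have "(\<Sum>i=1..d. c i t1) = 0" by simp
    moreover have "0 \<le> real k * \<mu> * t1" using t01 t0pos mu by simp
    ultimately show ?thesis unfolding \<Phi>_def by simp
  qed
  have cont: "continuous_on {t0..t1} \<Phi>"
    unfolding \<Phi>_def c_def by (intro continuous_intros)
  obtain \<xi> where xi: "t0 \<le> \<xi>" "\<xi> \<le> t1" "\<Phi> \<xi> = 0"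
    using IVT2'[of \<Phi> t1 0 t0, OF Phi1 Phi0 t01 cont] by auto
  have xipos: "\<xi> > 0" using xi t0pos by simp
  have hsum: "(\<Sum>i=1..d. c i \<xi>) = real k * \<mu> * \<xi>" using xi(3) unfolding \<Phi>_def by simp
  have ukxi: "u k \<le> (1+\<mu>) * \<xi>" using ukt0 xi(1) opm by simp
  have ukge: "\<xi> \<le> u k"
  proof (rule ccontr)
    assume "\<not> \<xi> \<le> u k"
    then have lt: "u k < \<xi>" by simp
    have "{1..d} = {1..<k} \<union> {k..d}" "{1..<k} \<inter> {k..d} = {}" using k1 kd by auto
    then have "(\<Sum>i=1..d. c i \<xi>) = (\<Sum>i\<in>{1..<k}. c i \<xi>) + (\<Sum>i=k..d. c i \<xi>)"
      by (simp add: sum.union_disjoint)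
    moreover have "(\<Sum>i=k..d. c i \<xi>) = 0"
    proof (rule sum.neutral, rule ballI)
      fix i assume i: "i \<in> {k..d}"
      have "u i \<le> u k" using mono i k1 by auto
      then show "c i \<xi> = 0" unfolding c_def using lt by simp
    qed
    moreover have "(\<Sum>i\<in>{1..<k}. c i \<xi>) \<le> real (card {1..<k}) * (\<mu> * \<xi>)"
    proof (rule sum_bounded_above)
      fix i
      have "c i \<xi> \<le> max 0 (\<mu> * \<xi>)" by (rule cle)
      then show "c i \<xi> \<le> \<mu> * \<xi>" using mu xipos by simp
    qed
    ultimately have "real k * \<mu> * \<xi> \<le> real (k - 1) * (\<mu> * \<xi>)" using hsum by simp
    then have "real k * (\<mu> * \<xi>) \<le> (real k - 1) * (\<mu> * \<xi>)" using k1 by (simp add: of_nat_diff)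
    moreover have "\<mu> * \<xi> > 0" using mu xipos by simp
    ultimately show False by (simp add: algebra_simps)
  qed
  define J where "J = {i\<in>{1..d}. u i \<le> (1+\<mu>) * \<xi>}"
  define E where "E = {i\<in>{1..d}. \<xi> \<le> u i}"
  define js where "js = Min J"
  define je where "je = Max E"
  have kJ: "k \<in> J" unfolding J_def using k1 kd ukxi by auto
  have kE: "k \<in> E" unfolding E_def using k1 kd ukge by auto
  have fJ: "finite J" "finite E" unfolding J_def E_def by auto
  have jsJ: "js \<in> J" unfolding js_def using fJ kJ by (intro Min_in) auto
  have jeE: "je \<in> E" unfolding je_def using fJ kE by (intro Max_in) auto
  have jsk: "js \<le> k" unfolding js_def using fJ kJ by auto
  have kje: "k \<le> je" unfolding je_def using fJ kE by auto
  have js1: "1 \<le> js" and jed: "je \<le> d" using jsJ jeE unfolding J_def E_def by auto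
  have ujs: "u js \<le> (1+\<mu>) * \<xi>" using jsJ unfolding J_def by auto
  have uje: "\<xi> \<le> u je" using jeE unfolding E_def by auto
  have C1: "\<forall>i. 1 \<le> i \<longrightarrow> i < js \<longrightarrow> (1+\<mu>)*\<xi> < u i"
  proof (intro allI impI)
    fix i assume i: "1 \<le> i" "i < js"
    have "i \<notin> J" using i fJ unfolding js_def using Min_le not_le by blast
    moreover have "i \<le> d" using i jsk kd by simp
    ultimately show "(1+\<mu>)*\<xi> < u i" using i unfolding J_def by auto
  qed
  have C3: "\<forall>i. je < i \<longrightarrow> i \<le> d \<longrightarrow> u i < \<xi>"
  proof (intro allI impI)
    fix i assume i: "je < i" "i \<le> d"
    have "i \<notin> E" using i fJ unfolding je_def using Max_ge not_le by blast
    then show "u i < \<xi>" using i js1 kje jsk unfolding E_def by auto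
  qed
  have C2: "\<forall>i\<in>{js..je}. \<xi> \<le> u i \<and> u i \<le> (1+\<mu>)*\<xi>"
  proof
    fix i assume i: "i \<in> {js..je}"
    have "u je \<le> u i" "u i \<le> u js" using mono i js1 jed by auto
    then show "\<xi> \<le> u i \<and> u i \<le> (1+\<mu>)*\<xi>" using ujs uje by simp
  qed
  have C4: "(\<Sum>i=js..je. u i - \<xi>) = \<mu> * real (k + 1 - js) * \<xi>"
  proof -
    define P where "P = {1..<js}"
    define B where "B = {js..je}"
    define Q where "Q = {je<..d}"
    have "{1..d} = (P \<union> B) \<union> Q" using js1 jsk kje jed unfolding P_def B_def Q_def by auto
    moreover have "(P \<union> B) \<inter> Q = {}" "P \<inter> B = {}" using jsk kje unfolding P_def B_def Q_def by auto
    ultimately have spl: "(\<Sum>i=1..d. c i \<xi>) = (\<Sum>i\<in>P. c i \<xi>) + (\<Sum>i\<in>B. c i \<xi>) + (\<Sum>i\<in>Q. c i \<xi>)"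
      by (simp add: sum.union_disjoint P_def B_def Q_def)
    have p: "(\<Sum>i\<in>P. c i \<xi>) = real (js - 1) * (\<mu> * \<xi>)"
    proof -
      have "(\<Sum>i\<in>P. c i \<xi>) = (\<Sum>i\<in>P. \<mu> * \<xi>)"
      proof (rule sum.cong, simp)
        fix i assume i: "i \<in> P"
        have "(1+\<mu>)*\<xi> < u i" using C1 i unfolding P_def by auto
        then show "c i \<xi> = \<mu> * \<xi>" unfolding c_def using mu xipos by (simp add: algebra_simps)
      qed
      then show ?thesis unfolding P_def by simp
    qed
    have b: "(\<Sum>i\<in>B. c i \<xi>) = (\<Sum>i\<in>B. u i - \<xi>)"
    proof (rule sum.cong, simp)
      fix i assume i: "i \<in> B"
      then show "c i \<xi> = u i - \<xi>" using C2 unfolding c_def B_def by (auto simp: algebra_simps)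
    qed
    have q: "(\<Sum>i\<in>Q. c i \<xi>) = 0"
    proof (rule sum.neutral, rule ballI)
      fix i assume i: "i \<in> Q"
      then show "c i \<xi> = 0" using C3 unfolding c_def Q_def by auto
    qed
    have "real (js - 1) * (\<mu> * \<xi>) + (\<Sum>i=js..je. u i - \<xi>) = real k * \<mu> * \<xi>"
      using spl p b q hsum unfolding B_def by simp
    moreover have "real (k + 1 - js) = real k - real (js - 1)" using js1 jsk by (simp add: of_nat_diff)
    ultimately show ?thesis by (simp add: algebra_simps)
  qed
  have S1: "(if je = d then 0 else u (je + 1)) \<le> \<xi>"
    using C3 jed xipos by (cases "je = d") auto
  have S2: "js = 1 \<or> \<xi> \<le> u (js - 1) / (1 + \<mu>)"
  proof (cases "js = 1")
    case False
    then have "(1+\<mu>)*\<xi> < u (js - 1)" using C1 js1 by auto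
    then show ?thesis using opm by (simp add: field_simps)
  qed simp
  have C1': "\<forall>i. 1 \<le> i \<longrightarrow> i < js \<longrightarrow> (1+\<mu>)*\<xi> \<le> u i" using C1 by (meson less_imp_le)
  have C3': "\<forall>i. je < i \<longrightarrow> i \<le> d \<longrightarrow> u i \<le> \<xi>" using C3 by (meson less_imp_le)
  have xinn: "0 \<le> \<xi>" using xipos by simp
  show ?thesis
    apply (rule exI[of _ js], rule exI[of _ je], rule exI[of _ \<xi>])
    using js1 jsk kje jed xinn C1' C2 C3' C4 S1 S2 by blast
qed



lemma sign_abs: "sign_of t * \<bar>t\<bar> = t" unfolding sign_of_def by auto
lemma sign_sq: "sign_of t * sign_of t = 1" unfolding sign_of_def by auto
lemma sign_shift: "(sign_of t * y - \<bar>t\<bar>)^2 = (y - t)^2"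
  unfolding sign_of_def by (auto simp: power2_eq_square algebra_simps)

lemma topk_perm:
  fixes \<sigma> :: "nat \<Rightarrow> nat" and s y :: "nat \<Rightarrow> real"
  assumes bij: "bij_betw \<sigma> {1..d} {1..d}" and s: "\<forall>i. (s i)^2 = 1"
  shows "topk_norm d k (\<lambda>i. if i \<in> {1..d} then s i * y (\<sigma> i) else 0) = topk_norm d k y"
proof -
  define z where "z = (\<lambda>i. if i \<in> {1..d} then s i * y (\<sigma> i) else 0)"
  define adm where "adm = {S. S \<subseteq> {1..d} \<and> card S \<le> k}"
  have inj: "inj_on \<sigma> {1..d}" using bij_betw_imp_inj_on[OF bij] .
  have img: "\<sigma> ` {1..d} = {1..d}" using bij_betw_imp_surj_on[OF bij] .
  have val: "(\<Sum>i\<in>S. (z i)^2) = (\<Sum>j\<in>\<sigma> ` S. (y j)^2)" if S: "S \<subseteq> {1..d}" for S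
  proof -
    have "inj_on \<sigma> S" using inj S inj_on_subset by blast
    then have "(\<Sum>j\<in>\<sigma> ` S. (y j)^2) = (\<Sum>i\<in>S. (y (\<sigma> i))^2)" by (simp add: sum.reindex)
    also have "\<dots> = (\<Sum>i\<in>S. (z i)^2)"
    proof (rule sum.cong, simp)
      fix i assume "i \<in> S"
      then have "i \<in> {1..d}" using S by auto
      then show "(y (\<sigma> i))^2 = (z i)^2" unfolding z_def using s[rule_format, of i]
        by (simp add: power_mult_distrib)
    qed
    finally show ?thesis by simp
  qed
  have eq: "(\<lambda>S. sqrt (\<Sum>i\<in>S. (z i)^2)) ` adm = (\<lambda>S. sqrt (\<Sum>i\<in>S. (y i)^2)) ` adm"
  proof
    show "(\<lambda>S. sqrt (\<Sum>i\<in>S. (z i)^2)) ` adm \<subseteq> (\<lambda>S. sqrt (\<Sum>i\<in>S. (y i)^2)) ` adm"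
    proof
      fix v assume "v \<in> (\<lambda>S. sqrt (\<Sum>i\<in>S. (z i)^2)) ` adm"
      then obtain S where S: "S \<subseteq> {1..d}" "card S \<le> k" and v: "v = sqrt (\<Sum>i\<in>S. (z i)^2)"
        unfolding adm_def by auto
      have "\<sigma> ` S \<subseteq> {1..d}" using S img by auto
      moreover have "card (\<sigma> ` S) \<le> k" using S card_image_le[of S \<sigma>] finite_subset[OF S(1)] by auto
      ultimately have "\<sigma> ` S \<in> adm" unfolding adm_def by auto
      then show "v \<in> (\<lambda>S. sqrt (\<Sum>i\<in>S. (y i)^2)) ` adm" using v val[OF S(1)] by auto
    qed
  next
    show "(\<lambda>S. sqrt (\<Sum>i\<in>S. (y i)^2)) ` adm \<subseteq> (\<lambda>S. sqrt (\<Sum>i\<in>S. (z i)^2)) ` adm"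
    proof
      fix v assume "v \<in> (\<lambda>S. sqrt (\<Sum>i\<in>S. (y i)^2)) ` adm"
      then obtain S' where S': "S' \<subseteq> {1..d}" "card S' \<le> k" and v: "v = sqrt (\<Sum>i\<in>S'. (y i)^2)"
        unfolding adm_def by auto
      define S where "S = {i \<in> {1..d}. \<sigma> i \<in> S'}"
      have SS: "\<sigma> ` S = S'"
      proof
        show "\<sigma> ` S \<subseteq> S'" unfolding S_def by auto
        show "S' \<subseteq> \<sigma> ` S"
        proof
          fix x assume x: "x \<in> S'"
          then have "x \<in> \<sigma> ` {1..d}" using S'(1) img by auto
          then obtain i where i: "i \<in> {1..d}" "x = \<sigma> i" by auto
          then have "i \<in> S" unfolding S_def using x by auto
          then show "x \<in> \<sigma> ` S" using i by auto
        qed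
      qed
      have Sd: "S \<subseteq> {1..d}" unfolding S_def by auto
      have "inj_on \<sigma> S" using inj Sd inj_on_subset by blast
      then have "card S = card S'" using SS card_image by fastforce
      then have "S \<in> adm" using Sd S' unfolding adm_def by auto
      then show "v \<in> (\<lambda>S. sqrt (\<Sum>i\<in>S. (z i)^2)) ` adm" using v val[OF Sd] SS by force
    qed
  qed
  show ?thesis unfolding topk_norm_def z_def[symmetric] adm_def[symmetric] eq ..
qed

lemma prox_part:
  fixes \<mu> :: real and u v xt :: "nat \<Rightarrow> real" and \<sigma> :: "nat \<Rightarrow> nat"
  assumes mu: "\<mu> > 0"
    and bij: "bij_betw \<sigma> {1..d} {1..d}" and uv: "\<forall>i\<in>{1..d}. u i = \<bar>v (\<sigma> i)\<bar>"
    and hx: "xt \<in> minimizers (\<lambda>x. \<mu> * (topk_norm d k x)^2 + (enorm d (\<lambda>i. x i - u i))^2) (vecs d)"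
  shows "prox_set d (\<lambda>y. \<mu> / 2 * (topk_norm d k y)^2) v =
              {\<lambda>j. if j \<in> {1..d} then sign_of (v j) * xt (the_inv_into {1..d} \<sigma> j) else 0}"
proof -
  define Fu where "Fu = (\<lambda>x. \<mu> * (topk_norm d k x)^2 + (enorm d (\<lambda>i. x i - u i))^2)"
  define Fv where "Fv = (\<lambda>x. \<mu> * (topk_norm d k x)^2 + (enorm d (\<lambda>i. x i - v i))^2)"
  define G where "G = (\<lambda>y. \<mu> / 2 * (topk_norm d k y)^2 + 1/2 * (enorm d (\<lambda>i. v i - y i))^2)"
  define ys where "ys = (\<lambda>j. if j \<in> {1..d} then sign_of (v j) * xt (the_inv_into {1..d} \<sigma> j) else (0::real))"
  define \<phi> where "\<phi> = (\<lambda>y::nat\<Rightarrow>real. \<lambda>i. if i \<in> {1..d} then sign_of (v (\<sigma> i)) * y (\<sigma> i) else 0)"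
  have inj: "inj_on \<sigma> {1..d}" using bij_betw_imp_inj_on[OF bij] .
  have img: "\<sigma> ` {1..d} = {1..d}" using bij_betw_imp_surj_on[OF bij] .
  have xtv: "xt \<in> vecs d" and xtmin: "\<forall>y\<in>vecs d. Fu xt \<le> Fu y"
    using hx unfolding minimizers_def Fu_def by auto
  have GF: "G y = Fv y / 2" for y
  proof -
    have "(enorm d (\<lambda>i. v i - y i))^2 = (enorm d (\<lambda>i. y i - v i))^2"
      unfolding enorm_sq by (simp add: power2_commute)
    then show ?thesis unfolding G_def Fv_def by simp
  qed
  have Fphi: "Fu (\<phi> y) = Fv y" for y
  proof -
    have t: "topk_norm d k (\<phi> y) = topk_norm d k y"
      unfolding \<phi>_def
      using topk_perm[OF bij, of "\<lambda>i. sign_of (v (\<sigma> i))" k y]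
      by (simp add: power2_eq_square sign_sq)
    have "(\<Sum>i=1..d. (\<phi> y i - u i)^2) = (\<Sum>i=1..d. (\<lambda>j. (y j - v j)^2) (\<sigma> i))"
    proof (rule sum.cong, simp)
      fix i assume i: "i \<in> {1..d}"
      show "(\<phi> y i - u i)^2 = (\<lambda>j. (y j - v j)^2) (\<sigma> i)"
        using i uv sign_shift[of "v (\<sigma> i)" "y (\<sigma> i)"] unfolding \<phi>_def by simp
    qed
    also have "\<dots> = (\<Sum>j=1..d. (y j - v j)^2)" by (rule sum.reindex_bij_betw[OF bij])
    finally show ?thesis unfolding Fu_def Fv_def enorm_sq t by simp
  qed
  have phiv: "\<phi> y \<in> vecs d" for y unfolding \<phi>_def vecs_def by auto
  have phiys: "\<phi> ys = xt"
  proof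
    fix i show "\<phi> ys i = xt i"
    proof (cases "i \<in> {1..d}")
      case True
      then have "\<sigma> i \<in> {1..d}" using img by auto
      moreover have "the_inv_into {1..d} \<sigma> (\<sigma> i) = i" by (rule the_inv_into_f_f[OF inj True])
      ultimately have "\<phi> ys i = sign_of (v (\<sigma> i)) * (sign_of (v (\<sigma> i)) * xt i)"
        using True unfolding \<phi>_def ys_def by simp
      then show ?thesis by (simp add: mult.assoc[symmetric] sign_sq)
    next
      case False then show ?thesis using xtv unfolding \<phi>_def vecs_def by auto
    qed
  qed
  have ysv: "ys \<in> vecs d" unfolding ys_def vecs_def by auto
  have ysmin: "\<forall>y\<in>vecs d. Fv ys \<le> Fv y"
  proof
    fix y assume "y \<in> vecs d"
    have "Fv ys = Fu xt" using Fphi[of ys] phiys by simp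
    also have "\<dots> \<le> Fu (\<phi> y)" using xtmin phiv by blast
    also have "\<dots> = Fv y" by (rule Fphi)
    finally show "Fv ys \<le> Fv y" .
  qed
  have ysFv: "ys \<in> minimizers Fv (vecs d)" using ysv ysmin unfolding minimizers_def by auto
  show ?thesis unfolding ys_def[symmetric]
  proof
    show "prox_set d (\<lambda>y. \<mu> / 2 * (topk_norm d k y)^2) v \<subseteq> {ys}"
    proof
      fix y assume "y \<in> prox_set d (\<lambda>y. \<mu> / 2 * (topk_norm d k y)^2) v"
      then have "y \<in> minimizers G (vecs d)" unfolding prox_set_def G_def by simp
      then have "y \<in> minimizers Fv (vecs d)" unfolding minimizers_def GF by auto
      then have "y = ys" using unique_min[OF mu, of y d k v ys] ysFv unfolding Fv_def by blast
      then show "y \<in> {ys}" by simp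
    qed
  next
    have "ys \<in> minimizers G (vecs d)" using ysFv unfolding minimizers_def GF by auto
    then show "{ys} \<subseteq> prox_set d (\<lambda>y. \<mu> / 2 * (topk_norm d k y)^2) v"
      unfolding prox_set_def G_def by simp
  qed
qed



theorem mainTheorem7:
  fixes d k :: nat and \<mu> :: real and u xt :: "nat \<Rightarrow> real"
  assumes "1 \<le> k" and "k < d" and "\<mu> > 0"
    and "\<forall>i j. 1 \<le> i \<longrightarrow> i \<le> j \<longrightarrow> j \<le> d \<longrightarrow> u j \<le> u i"
    and "u d \<ge> 0"
    and "xt \<in> minimizers (\<lambda>x. \<mu> * (topk_norm d k x)^2 + (enorm d (\<lambda>i. x i - u i))^2) (vecs d)"
  shows "(\<exists>js\<in>{1..k}. \<exists>je\<in>{k..d}. \<exists>\<xi>.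
            (if je = d then 0 else u (je + 1)) \<le> \<xi> \<and>
            (js = 1 \<or> \<xi> \<le> u (js - 1) / (1 + \<mu>)) \<and>
            (\<forall>i\<in>{1..d}. xt i = (if i < js then u i / (1 + \<mu>) else if i \<le> je then \<xi> else u i)))
       \<and> (\<forall>v \<sigma>. bij_betw \<sigma> {1..d} {1..d} \<and> (\<forall>i\<in>{1..d}. u i = \<bar>v (\<sigma> i)\<bar>) \<longrightarrow>
            prox_set d (\<lambda>y. \<mu> / 2 * (topk_norm d k y)^2) v =
              {\<lambda>j. if j \<in> {1..d} then sign_of (v j) * xt (the_inv_into {1..d} \<sigma> j) else 0})"
proof -
  note k1 = assms(1) and mu = assms(3) and mono = assms(4) and hx = assms(6)
  have kd: "k \<le> d" using assms(2) by simp
  have unn: "\<forall>i\<in>{1..d}. 0 \<le> u i"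
  proof
    fix i assume i: "i \<in> {1..d}"
    then have "u d \<le> u i" using mono by auto
    then show "0 \<le> u i" using assms(5) by simp
  qed
  obtain js je \<xi> where p: "1 \<le> js" "js \<le> k" "k \<le> je" "je \<le> d" "0 \<le> \<xi>"
    "\<forall>i. 1 \<le> i \<longrightarrow> i < js \<longrightarrow> (1+\<mu>)*\<xi> \<le> u i"
    "\<forall>i\<in>{js..je}. \<xi> \<le> u i \<and> u i \<le> (1+\<mu>)*\<xi>"
    "\<forall>i. je < i \<longrightarrow> i \<le> d \<longrightarrow> u i \<le> \<xi>"
    "(\<Sum>i=js..je. u i - \<xi>) = \<mu> * real (k + 1 - js) * \<xi>"
    "(if je = d then 0 else u (je + 1)) \<le> \<xi>"
    "js = 1 \<or> \<xi> \<le> u (js - 1) / (1 + \<mu>)"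
    using exist_params[OF k1 kd mu mono unn] by blast
  define x where "x = (\<lambda>i. if i \<in> {1..d} then (if i < js then u i/(1+\<mu>) else if i \<le> je then \<xi> else u i) else 0)"
  have xm: "x \<in> minimizers (\<lambda>x. \<mu>*(topk_norm d k x)^2 + (enorm d (\<lambda>i. x i - u i))^2) (vecs d)"
    unfolding x_def by (rule cert[OF k1 kd mu mono unn p(1-9)])
  have xx: "xt = x" by (rule unique_min[OF mu hx xm])
  have part1: "\<exists>js\<in>{1..k}. \<exists>je\<in>{k..d}. \<exists>\<xi>.
            (if je = d then 0 else u (je + 1)) \<le> \<xi> \<and>
            (js = 1 \<or> \<xi> \<le> u (js - 1) / (1 + \<mu>)) \<and>
            (\<forall>i\<in>{1..d}. xt i = (if i < js then u i / (1 + \<mu>) else if i \<le> je then \<xi> else u i))"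
  proof -
    have "\<forall>i\<in>{1..d}. xt i = (if i < js then u i / (1 + \<mu>) else if i \<le> je then \<xi> else u i)"
      unfolding xx x_def by simp
    moreover have "js \<in> {1..k}" "je \<in> {k..d}" using p(1-4) by auto
    ultimately show ?thesis using p(10,11) by blast
  qed
  have part2: "\<forall>v \<sigma>. bij_betw \<sigma> {1..d} {1..d} \<and> (\<forall>i\<in>{1..d}. u i = \<bar>v (\<sigma> i)\<bar>) \<longrightarrow>
            prox_set d (\<lambda>y. \<mu> / 2 * (topk_norm d k y)^2) v =
              {\<lambda>j. if j \<in> {1..d} then sign_of (v j) * xt (the_inv_into {1..d} \<sigma> j) else 0}"
    using prox_part[OF mu _ _ hx] by blast
  show ?thesis using part1 part2 by blast
qed

end
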